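(* Let $p,\sigma,\bar\theta>0$, let $E:[0,\infty)\to\mathbb R$ be continuous with $|E(t)|\le Ce^{-ct}$ for some $C,c>0$, and let $y:[0,\infty)\to[0,\infty)$ be a non-negative $C^1$ solution of $$\dot y=p\sigma\,y(\bar\theta-y)+E(t).$$ Then either $y(t)\to0$ as $t\to\infty$, or there exist $C',\delta>0$ such that $|y(t)-\bar\theta|\le C'e^{-\delta t}$ for all $t\ge0$. *)

theory Defs
  imports "HOL-Analysis.Analysis"
begin

end

theory Submission imports Defs "HOL-Analysis.Analysis" "HOL-Real_Asymp.Real_Asymp" begin

lemma barrier:
  fixes h :: "real \<Rightarrow> real"
  assumes a0: "a \<ge> 0" and ha: "h a < 0"
    and der: "\<And>t. t \<ge> a \<Longrightarrow> \<exists>D. (h has_real_derivative D) (at t within {0..}) \<and> (h t = 0 \<longrightarrow> D < 0)"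
  shows "\<And>t. t \<ge> a \<Longrightarrow> h t < 0"
proof (rule ccontr)
  fix t1 assume t1: "t1 \<ge> a" and n: "\<not> h t1 < 0"
  have cont: "continuous_on {a..t1} h"
    unfolding continuous_on_eq_continuous_within
  proof
    fix x assume x: "x \<in> {a..t1}"
    then obtain D where "(h has_real_derivative D) (at x within {0..})" using der by auto
    then have "continuous (at x within {0..}) h" by (rule DERIV_continuous)
    then show "continuous (at x within {a..t1}) h"
      by (rule continuous_within_subset) (use a0 in auto)
  qed
  define Z where "Z = {s \<in> {a..t1}. h s = 0}"
  have "\<exists>x\<ge>a. x \<le> t1 \<and> h x = 0"
    by (rule IVT') (use ha n t1 cont in auto)
  then have Zne: "Z \<noteq> {}" unfolding Z_def by auto
  have Zcl: "closed Z" unfolding Z_def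
    by (rule continuous_closed_preimage_constant[OF cont]) auto
  have Zbdd: "bdd_below Z" unfolding Z_def by (auto intro: bdd_belowI[of _ a])
  define s where "s = Inf Z"
  have sZ: "s \<in> Z" unfolding s_def by (rule closed_contains_Inf[OF Zne Zbdd Zcl])
  have sle: "\<And>u. u \<in> Z \<Longrightarrow> s \<le> u" unfolding s_def using Zbdd by (simp add: cInf_lower)
  have hs: "h s = 0" and sa: "s \<ge> a" and st: "s \<le> t1" using sZ Z_def by auto
  have sa': "s > a" using hs ha sa by (cases "s = a") auto
  obtain D where D: "(h has_real_derivative D) (at s within {0..})" "h s = 0 \<longrightarrow> D < 0"
    using der sa by blast
  have "at s within {0..} = at s"
    by (rule at_within_interior) (use sa' a0 in auto)
  with D have DD: "DERIV h s :> D" "D < 0" using hs by auto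
  obtain d where d: "d > 0" "\<And>e. e > 0 \<Longrightarrow> e < d \<Longrightarrow> h s < h (s - e)"
    using DERIV_neg_dec_left[OF DD] by blast
  define u where "u = s - min (d/2) ((s-a)/2)"
  have u1: "u < s" "u > a" using d(1) sa' unfolding u_def by (auto simp: min_def field_simps)
  have "h u > 0" using d(2)[of "min (d/2) ((s-a)/2)"] d sa' hs unfolding u_def by auto
  have "\<exists>x\<ge>a. x \<le> u \<and> h x = 0"
    by (rule IVT') (use ha \<open>h u > 0\<close> u1 st in \<open>auto intro!: continuous_on_subset[OF cont]\<close>)
  then obtain x where "x \<ge> a" "x \<le> u" "h x = 0" by auto
  then have "x \<in> Z" using u1 st unfolding Z_def by auto
  then show False using sle u1 \<open>x \<le> u\<close> by fastforce
qed


theorem lemma3p2: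
  fixes p \<sigma> \<theta> C c :: real and E y :: "real \<Rightarrow> real"
  assumes "p > 0" and "\<sigma> > 0" and "\<theta> > 0"
    and "continuous_on {0..} E"
    and "C > 0" and "c > 0"
    and "\<And>t. t \<ge> 0 \<Longrightarrow> \<bar>E t\<bar> \<le> C * exp (- c * t)"
    and "\<And>t. t \<ge> 0 \<Longrightarrow> y t \<ge> 0"
    and "\<And>t. t \<ge> 0 \<Longrightarrow>
           (y has_real_derivative (p * \<sigma> * y t * (\<theta> - y t) + E t)) (at t within {0..})"
  shows "(y \<longlongrightarrow> 0) at_top \<or>
         (\<exists>C' \<delta>. C' > 0 \<and> \<delta> > 0 \<and> (\<forall>t\<ge>0. \<bar>y t - \<theta>\<bar> \<le> C' * exp (- \<delta> * t)))"
proof (cases "(y \<longlongrightarrow> 0) at_top")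
  case True then show ?thesis by simp
next
  case False
  note Ebd = assms(7) and ynn = assms(8)
  define k where "k = p * \<sigma>"
  have k0: "k > 0" unfolding k_def using assms(1,2) by simp
  have yder: "\<And>t. t \<ge> 0 \<Longrightarrow> (y has_real_derivative (k * y t * (\<theta> - y t) + E t)) (at t within {0..})"
    using assms(9) unfolding k_def by simp
  from False obtain e where e0: "e > 0" and ne: "\<not> eventually (\<lambda>x. dist (y x) 0 < e) at_top"
    unfolding tendsto_iff by blast
  define \<epsilon> where "\<epsilon> = min e (\<theta>/2)"
  define \<eta> where "\<eta> = \<epsilon>/2"
  have \<eta>0: "\<eta> > 0" and \<eta>\<theta>: "\<eta> < \<theta>" and \<eta>e: "\<eta> < e"
    unfolding \<eta>_def \<epsilon>_def using e0 assms(3) by auto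
  define m where "m = k * \<eta> * (\<theta> - \<eta>)"
  have m0: "m > 0" unfolding m_def using k0 \<eta>0 \<eta>\<theta> by simp
  have lim: "((\<lambda>t. C * exp (- c * t)) \<longlongrightarrow> 0) at_top" using assms(6) by real_asymp
  then have "eventually (\<lambda>t. C * exp (- c * t) < m) at_top"
    using m0 by (rule order_tendstoD)
  then obtain N where N: "\<And>t. t \<ge> N \<Longrightarrow> C * exp (- c * t) < m"
    unfolding eventually_at_top_linorder by blast
  define T0 where "T0 = max N 0"
  from ne obtain t1 where t1: "t1 \<ge> T0" "\<not> dist (y t1) 0 < e"
    unfolding eventually_at_top_linorder by blast
  have t10: "t1 \<ge> 0" using t1 T0_def by simp
  have yt1: "y t1 > \<eta>" using t1(2) \<eta>e ynn[OF t10] by simp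
  have small: "\<And>t. t \<ge> t1 \<Longrightarrow> \<bar>E t\<bar> < m"
  proof -
    fix t assume "t \<ge> t1"
    then have "t \<ge> N" "t \<ge> 0" using t1 T0_def by auto
    then show "\<bar>E t\<bar> < m" using N Ebd by (meson le_less_trans)
  qed
  have ypos: "\<And>t. t \<ge> t1 \<Longrightarrow> \<eta> - y t < 0"
  proof (rule barrier[of t1 "\<lambda>t. \<eta> - y t"])
    show "0 \<le> t1" by fact
    show "\<eta> - y t1 < 0" using yt1 by simp
    fix t assume t: "t \<ge> t1"
    have "((\<lambda>t. \<eta> - y t) has_real_derivative (0 - (k * y t * (\<theta> - y t) + E t))) (at t within {0..})"
      by (intro DERIV_diff DERIV_const yder) (use t t10 in auto)
    moreover have "\<eta> - y t = 0 \<longrightarrow> 0 - (k * y t * (\<theta> - y t) + E t) < 0"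
      using small[OF t] unfolding m_def by auto
    ultimately show "\<exists>D. ((\<lambda>t. \<eta> - y t) has_real_derivative D) (at t within {0..}) \<and>
        (\<eta> - y t = 0 \<longrightarrow> D < 0)" by blast
  qed
  define \<delta> where "\<delta> = min c (k * \<eta> / 2)"
  have \<delta>0: "\<delta> > 0" and \<delta>c: "\<delta> \<le> c" and \<delta>k: "k * \<eta> - \<delta> \<ge> k * \<eta> / 2"
    unfolding \<delta>_def using assms(6) k0 \<eta>0 by (auto simp: min_def mult.commute)
  have "k * \<eta> > 0" using k0 \<eta>0 by simp
  then have kd0: "k * \<eta> - \<delta> > 0" using \<delta>k by linarith
  define A where "A = C / (k * \<eta> - \<delta>) + \<bar>y t1 - \<theta>\<bar> * exp (\<delta> * t1) + 1"
  have A1: "A > C / (k * \<eta> - \<delta>)" unfolding A_def by (simp add: add_nonneg_pos)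
  have AC: "C < (k * \<eta> - \<delta>) * A" using A1 kd0 by (simp add: field_simps)
  have A0: "A > 0" using A1 kd0 assms(5) by (smt (verit) divide_pos_pos)
  define g where "g t = A * exp (- \<delta> * t)" for t
  have gpos: "g t > 0" for t unfolding g_def using A0 by simp
  have gder: "(g has_real_derivative (- \<delta> * g t)) (at t within {0..})" for t
    unfolding g_def by (auto intro!: derivative_eq_intros)
  have ga: "\<bar>y t1 - \<theta>\<bar> < g t1"
  proof -
    have "\<bar>y t1 - \<theta>\<bar> = \<bar>y t1 - \<theta>\<bar> * exp (\<delta> * t1) * exp (- \<delta> * t1)"
      by (simp add: exp_minus field_simps)
    also have "\<dots> < A * exp (- \<delta> * t1)"
      by (rule mult_strict_right_mono) (use kd0 assms(5) in \<open>auto simp: A_def intro!: add_nonneg_pos\<close>)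
    finally show ?thesis unfolding g_def .
  qed
  have key: "- k * y t * g t + E t + \<delta> * g t < 0" if t: "t \<ge> t1" for t
  proof -
    have t0: "t \<ge> 0" using t t10 by simp
    have "k * \<eta> * g t < k * y t * g t" using ypos[OF t] k0 gpos[of t] by simp
    moreover have "E t \<le> C * exp (- c * t)" using Ebd[OF t0] by simp
    moreover have "exp (- c * t) \<le> exp (- \<delta> * t)" using \<delta>c t0 by (simp add: mult_right_mono)
    then have "C * exp (- c * t) \<le> C * exp (- \<delta> * t)" using assms(5) by simp
    moreover have "C * exp (- \<delta> * t) < (k * \<eta> - \<delta>) * g t"
      unfolding g_def using AC by simp
    ultimately show ?thesis by (simp add: algebra_simps)
  qed
  have up: "\<And>t. t \<ge> t1 \<Longrightarrow> (y t - \<theta>) - g t < 0"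
  proof (rule barrier[of t1 "\<lambda>t. (y t - \<theta>) - g t"])
    show "0 \<le> t1" by fact
    show "(y t1 - \<theta>) - g t1 < 0" using ga by simp
    fix t assume t: "t \<ge> t1"
    have "((\<lambda>t. (y t - \<theta>) - g t) has_real_derivative
        ((k * y t * (\<theta> - y t) + E t - 0) - (- \<delta> * g t))) (at t within {0..})"
      by (intro DERIV_diff DERIV_const yder gder) (use t t10 in auto)
    moreover have "(y t - \<theta>) - g t = 0 \<longrightarrow> (k * y t * (\<theta> - y t) + E t - 0) - (- \<delta> * g t) < 0"
    proof
      assume "(y t - \<theta>) - g t = 0"
      then have "\<theta> - y t = - g t" by simp
      then show "(k * y t * (\<theta> - y t) + E t - 0) - (- \<delta> * g t) < 0" using key[OF t] by simp
    qed
    ultimately show "\<exists>D. ((\<lambda>t. (y t - \<theta>) - g t) has_real_derivative D) (at t within {0..}) \<and>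
        ((y t - \<theta>) - g t = 0 \<longrightarrow> D < 0)" by blast
  qed
  have lo: "\<And>t. t \<ge> t1 \<Longrightarrow> - (y t - \<theta>) - g t < 0"
  proof (rule barrier[of t1 "\<lambda>t. - (y t - \<theta>) - g t"])
    show "0 \<le> t1" by fact
    show "- (y t1 - \<theta>) - g t1 < 0" using ga by simp
    fix t assume t: "t \<ge> t1"
    have "((\<lambda>t. - (y t - \<theta>) - g t) has_real_derivative
        (- (k * y t * (\<theta> - y t) + E t - 0) - (- \<delta> * g t))) (at t within {0..})"
      by (intro DERIV_diff DERIV_minus DERIV_const yder gder) (use t t10 in auto)
    moreover have "- (y t - \<theta>) - g t = 0 \<longrightarrow> - (k * y t * (\<theta> - y t) + E t - 0) - (- \<delta> * g t) < 0"
    proof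
      assume "- (y t - \<theta>) - g t = 0"
      then have "\<theta> - y t = g t" by simp
      moreover have "E t \<ge> - C * exp (- c * t)" using Ebd[of t] t t10 by simp
      moreover have "- k * y t * g t + (- E t) + \<delta> * g t < 0"
      proof -
        have t0: "t \<ge> 0" using t t10 by simp
        have "k * \<eta> * g t < k * y t * g t" using ypos[OF t] k0 gpos[of t] by simp
        moreover have "- E t \<le> C * exp (- c * t)" using Ebd[OF t0] by simp
        moreover have "exp (- c * t) \<le> exp (- \<delta> * t)" using \<delta>c t0 by (simp add: mult_right_mono)
        then have "C * exp (- c * t) \<le> C * exp (- \<delta> * t)" using assms(5) by simp
        moreover have "C * exp (- \<delta> * t) < (k * \<eta> - \<delta>) * g t"
          unfolding g_def using AC by simp
        ultimately show ?thesis by (simp add: algebra_simps)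
      qed
      ultimately show "- (k * y t * (\<theta> - y t) + E t - 0) - (- \<delta> * g t) < 0" by (simp add: algebra_simps)
    qed
    ultimately show "\<exists>D. ((\<lambda>t. - (y t - \<theta>) - g t) has_real_derivative D) (at t within {0..}) \<and>
        (- (y t - \<theta>) - g t = 0 \<longrightarrow> D < 0)" by blast
  qed
  have ycont: "continuous_on {0..t1} y"
    unfolding continuous_on_eq_continuous_within
  proof
    fix x assume x: "x \<in> {0..t1}"
    then have "continuous (at x within {0..}) y" using yder[of x] DERIV_continuous by auto
    then show "continuous (at x within {0..t1}) y"
      by (rule continuous_within_subset) auto
  qed
  have "bounded ((\<lambda>t. y t - \<theta>) ` {0..t1})"
    by (intro compact_imp_bounded compact_continuous_image continuous_intros ycont) auto
  then obtain B where B: "\<And>t. t \<in> {0..t1} \<Longrightarrow> \<bar>y t - \<theta>\<bar> \<le> B"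
    unfolding bounded_iff by (metis image_eqI real_norm_def)
  define C' where "C' = A + \<bar>B\<bar> * exp (\<delta> * t1)"
  have C'0: "C' > 0" unfolding C'_def using A0 by (simp add: add_pos_nonneg)
  have "\<forall>t\<ge>0. \<bar>y t - \<theta>\<bar> \<le> C' * exp (- \<delta> * t)"
  proof (intro allI impI)
    fix t :: real assume t0: "t \<ge> 0"
    show "\<bar>y t - \<theta>\<bar> \<le> C' * exp (- \<delta> * t)"
    proof (cases "t \<ge> t1")
      case True
      have "\<bar>y t - \<theta>\<bar> < g t" using up[OF True] lo[OF True] by simp
      also have "g t \<le> C' * exp (- \<delta> * t)" unfolding g_def C'_def
        by (simp add: distrib_right)
      finally show ?thesis by simp
    next
      case False
      have "\<bar>y t - \<theta>\<bar> \<le> \<bar>B\<bar>" using B[of t] False t0 by simp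
      also have "\<bar>B\<bar> \<le> \<bar>B\<bar> * (exp (\<delta> * t1) * exp (- \<delta> * t))"
      proof -
        have "exp (\<delta> * t1) * exp (- \<delta> * t) = exp (\<delta> * (t1 - t))" by (simp add: exp_add[symmetric] algebra_simps)
        also have "\<dots> \<ge> 1" using False \<delta>0 by simp
        finally show ?thesis by (simp add: mult_le_cancel_left1)
      qed
      also have "\<dots> \<le> C' * exp (- \<delta> * t)" unfolding C'_def using A0
        by (simp add: distrib_right)
      finally show ?thesis .
    qed
  qed
  then show ?thesis using C'0 \<delta>0 by blast
qed

end
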